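(* Let $g:\mathbb{Z}_{\ge 0}\to\mathbb{R}$ be a linearly progressing opponent process (LPOP) with switching time $\tau_0\ge1$ (so $g(0)>0$). Let $T\ge1$, $y_{\min}\in\mathbb{R}$, and let $(y^{\mathrm{nat,lb}}_t)_{t=1}^{T}$ be a given real sequence. Define doses recursively for $t=0,\dots,T-1$ by $$u_t=\max\left\{0,\ \frac{y_{\min}-y^{\mathrm{nat,lb}}_{t+1}-\sum_{k=1}^{t} g(k)\,u_{t-k}}{g(0)}\right\}.$$ Call a natural progression $(y^{\mathrm{nat}}_t)_{t\ge0}$ admissible if $y^{\mathrm{nat}}_t\ge y^{\mathrm{nat,lb}}_t$ for all $t=1,\dots,T$. Then: (a) for every admissible natural progression, the well-being sequence defined by $y_0=y^{\mathrm{nat}}_0$ and $y_{t+1}=\sum_{k=0}^{t}g(k)u_{t-k}+y^{\mathrm{nat}}_{t+1}$ satisfies $y_t\ge y_{\min}$ for all $t=1,\dots,T$; and (b) $(u_t)$ has minimal cumulative dose $\sum_{t=0}^{T-1}u_t$ among all nonnegative dosing sequences $(u'_0,\dots,u'_{T-1})$ that guarantee $y'_t\ge y_{\min}$ for all $t=1,\dots,T$ under every admissible natural progression.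
   Context: An impulse response $g:\mathbb{Z}_{\ge0}\to\mathbb{R}$ is an opponent process if there is a time $\tau_0$ with $g(\tau)>0$ for $\tau<\tau_0$ and $g(\tau)\le 0$ for $\tau\ge\tau_0$. It is a linearly progressing opponent process (LPOP) if in addition there is $\alpha\in[0,1)$ with $g(t+1)\le\alpha\,g(t)$ for all $t<\tau_0-1$ and $|g(t+1)|\ge\alpha\,|g(t)|$ for all $t\ge\tau_0$. Doses are nonnegative reals; the well-being of a dosing sequence $u'$ under natural progression $y^{\mathrm{nat}}$ is $y'_0=y^{\mathrm{nat}}_0$, $y'_{t+1}=\sum_{k=0}^{t}g(k)u'_{t-k}+y^{\mathrm{nat}}_{t+1}$. *)

theory Defs
  imports Complex_Main
begin

definition opponent_process :: "(nat \<Rightarrow> real) \<Rightarrow> nat \<Rightarrow> bool" where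
  "opponent_process g tau0 \<longleftrightarrow>
     (\<forall>\<tau><tau0. g \<tau> > 0) \<and> (\<forall>\<tau>\<ge>tau0. g \<tau> \<le> 0)"

definition LPOP :: "(nat \<Rightarrow> real) \<Rightarrow> nat \<Rightarrow> bool" where
  "LPOP g tau0 \<longleftrightarrow> opponent_process g tau0 \<and>
     (\<exists>\<alpha>::real. 0 \<le> \<alpha> \<and> \<alpha> < 1 \<and>
        (\<forall>t. t + 1 < tau0 \<longrightarrow> g (t + 1) \<le> \<alpha> * g t) \<and>
        (\<forall>t\<ge>tau0. \<bar>g (t + 1)\<bar> \<ge> \<alpha> * \<bar>g t\<bar>))"

fun wellbeing :: "(nat \<Rightarrow> real) \<Rightarrow> (nat \<Rightarrow> real) \<Rightarrow> (nat \<Rightarrow> real) \<Rightarrow> nat \<Rightarrow> real" where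
  "wellbeing g u ynat 0 = ynat 0"
| "wellbeing g u ynat (Suc t) = (\<Sum>k\<le>t. g k * u (t - k)) + ynat (Suc t)"

definition admissible :: "nat \<Rightarrow> (nat \<Rightarrow> real) \<Rightarrow> (nat \<Rightarrow> real) \<Rightarrow> bool" where
  "admissible T ylb ynat \<longleftrightarrow> (\<forall>t\<in>{1..T}. ynat t \<ge> ylb t)"

end

theory Submission
  imports Defs
begin


lemma lpop_shift:
  assumes "LPOP g tau0" and "tau0 \<ge> 1"
  obtains \<alpha> where "0 \<le> \<alpha>" "\<alpha> < 1" "\<And>k. k \<ge> 1 \<Longrightarrow> g k \<le> \<alpha> * g (k - 1)" "g 0 > 0"
proof -
  from assms(1) obtain \<alpha> where a0: "0 \<le> \<alpha>" and a1: "\<alpha> < 1"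
    and pos: "\<And>t. t + 1 < tau0 \<Longrightarrow> g (t + 1) \<le> \<alpha> * g t"
    and neg: "\<And>t. t \<ge> tau0 \<Longrightarrow> \<bar>g (t + 1)\<bar> \<ge> \<alpha> * \<bar>g t\<bar>"
    and gp: "\<And>t. t < tau0 \<Longrightarrow> g t > 0" and gn: "\<And>t. t \<ge> tau0 \<Longrightarrow> g t \<le> 0"
    unfolding LPOP_def opponent_process_def by blast
  have "g k \<le> \<alpha> * g (k - 1)" if "k \<ge> 1" for k
  proof -
    consider "k < tau0" | "k = tau0" | "k > tau0" by linarith
    then show ?thesis
    proof cases
      case 1 then show ?thesis using pos[of "k-1"] that by simp
    next
      case 2
      have "\<alpha> * g (k - 1) \<ge> 0" using gp[of "k-1"] a0 2 that by simp
      then show ?thesis using gn[of k] 2 by linarith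
    next
      case 3
      have "\<bar>g k\<bar> \<ge> \<alpha> * \<bar>g (k-1)\<bar>" using neg[of "k-1"] 3 that by simp
      moreover have "g k \<le> 0" "g (k-1) \<le> 0" using gn 3 by auto
      ultimately show ?thesis by simp
    qed
  qed
  moreover have "g 0 > 0" using gp assms(2) by simp
  ultimately show ?thesis using that a0 a1 by blast
qed

lemma rev_sum: "(\<Sum>k\<le>(m::nat). (g::nat\<Rightarrow>real) k * v (m - k)) = (\<Sum>j\<le>m. g (m - j) * (v j :: real))"
proof -
  have "(\<Sum>k\<le>m. g k * v (m - k)) = (\<Sum>k=0..m. g k * v (m - k))"
    by (simp add: atMost_atLeast0)
  also have "\<dots> = (\<Sum>j=0..m. g (m + 0 - j) * v (m - (m + 0 - j)))"
    by (rule sum.atLeastAtMost_rev)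
  also have "\<dots> = (\<Sum>j=0..m. g (m - j) * v j)"
    by (intro sum.cong) auto
  finally show ?thesis by (simp add: atMost_atLeast0)
qed

theorem proposition1:
  fixes g u ylb :: "nat \<Rightarrow> real" and tau0 T :: nat and ymin :: real
  assumes "LPOP g tau0" and "tau0 \<ge> 1" and "T \<ge> 1"
    and u_def: "\<forall>t<T. u t = max 0 ((ymin - ylb (t + 1) - (\<Sum>k=1..t. g k * u (t - k))) / g 0)"
  shows "(\<forall>ynat. admissible T ylb ynat \<longrightarrow> (\<forall>t\<in>{1..T}. wellbeing g u ynat t \<ge> ymin))
    \<and> (\<forall>u'. (\<forall>t<T. u' t \<ge> 0) \<longrightarrow>
          (\<forall>ynat. admissible T ylb ynat \<longrightarrow> (\<forall>t\<in>{1..T}. wellbeing g u' ynat t \<ge> ymin)) \<longrightarrow>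
          (\<Sum>t<T. u t) \<le> (\<Sum>t<T. u' t))"
proof -
  have ue: "u m = max 0 ((ymin - ylb (m + 1) - (\<Sum>k=1..m. g k * u (m - k))) / g 0)" if "m < T" for m
    using u_def that by blast
  obtain \<alpha> where a0: "0 \<le> \<alpha>" and a1: "\<alpha> < 1"
    and sh: "\<And>k. k \<ge> 1 \<Longrightarrow> g k \<le> \<alpha> * g (k - 1)" and g0: "g 0 > 0"
    using lpop_shift[OF assms(1,2)] by blast
  have split: "(\<Sum>k\<le>m. g k * v (m - k)) = g 0 * v m + (\<Sum>k=1..m. g k * v (m - k))"
    for m and v :: "nat \<Rightarrow> real"
  proof -
    have "{..m} = insert 0 {1..m}" by auto
    then show ?thesis by simp
  qed
  have ugeq: "g 0 * u m + (\<Sum>k=1..m. g k * u (m - k)) + ylb (Suc m) \<ge> ymin" if "m < T" for m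
  proof -
    have "u m \<ge> (ymin - ylb (m + 1) - (\<Sum>k=1..m. g k * u (m - k))) / g 0"
      unfolding ue[OF that] by (rule max.cobounded2)
    then have "g 0 * u m \<ge> ymin - ylb (m + 1) - (\<Sum>k=1..m. g k * u (m - k))"
      using g0 by (simp add: divide_le_eq mult.commute)
    then show ?thesis by simp
  qed
  have unn: "u m \<ge> 0" if "m < T" for m unfolding ue[OF that] by (rule max.cobounded1)
  have partA: "\<forall>ynat. admissible T ylb ynat \<longrightarrow> (\<forall>t\<in>{1..T}. wellbeing g u ynat t \<ge> ymin)"
  proof (intro allI impI ballI)
    fix ynat t assume adm: "admissible T ylb ynat" and t: "t \<in> {1..T}"
    then obtain m where m: "t = Suc m" "m < T" by (cases t) auto
    have "ynat (Suc m) \<ge> ylb (Suc m)" using adm m unfolding admissible_def by auto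
    then show "wellbeing g u ynat t \<ge> ymin" using ugeq[OF m(2)] m split[of u m] by simp
  qed
  have main: "\<forall>n v. n + j = T \<longrightarrow> (\<forall>t<T. v t \<ge> 0) \<longrightarrow>
      (\<forall>m<T. (\<Sum>k\<le>m. g k * v (m - k)) + ylb (Suc m) \<ge> ymin) \<longrightarrow>
      (\<forall>s<n. v s = u s) \<longrightarrow> (\<Sum>t<T. u t) \<le> (\<Sum>t<T. v t)" for j
  proof (induction j)
    case 0
    then show ?case by (auto intro: sum.cong)
  next
    case (Suc j)
    show ?case
    proof (intro allI impI)
      fix n v assume nj: "n + Suc j = T" and vnn: "\<forall>t<T. v t \<ge> 0"
        and feas: "\<forall>m<T. (\<Sum>k\<le>m. g k * v (m - k)) + ylb (Suc m) \<ge> ymin"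
        and agree: "\<forall>s<n. v s = u s"
      have nT: "n < T" using nj by simp
      have Seq: "(\<Sum>k=1..n. g k * v (n - k)) = (\<Sum>k=1..n. g k * u (n - k))"
        using agree by (intro sum.cong) auto
      have "u n \<le> v n"
      proof (cases "u n = 0")
        case True then show ?thesis using vnn nT by simp
      next
        case False
        then have "u n = (ymin - ylb (n + 1) - (\<Sum>k=1..n. g k * u (n - k))) / g 0"
          using ue[OF nT] by (simp add: max_def split: if_splits)
        moreover have "g 0 * v n \<ge> ymin - ylb (n + 1) - (\<Sum>k=1..n. g k * u (n - k))"
          using feas[rule_format, OF nT] split[of v n] Seq by simp
        ultimately show ?thesis using g0 by (simp add: divide_le_eq mult.commute)
      qed
      define \<delta> where "\<delta> = v n - u n"
      have d0: "\<delta> \<ge> 0" using \<open>u n \<le> v n\<close> \<delta>_def by simp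
      define d :: "nat \<Rightarrow> real" where
        "d i = (if i = n then - \<delta> else 0) + (if i = Suc n then \<alpha> * \<delta> else 0)" for i
      define w where "w i = v i + d i" for i
      have w1: "\<forall>t<T. w t \<ge> 0"
      proof (intro allI impI)
        fix t assume "t < T"
        then show "w t \<ge> 0" using vnn unn[OF nT] a0 d0
          by (auto simp: w_def d_def \<delta>_def)
      qed
      have w3: "\<forall>s<Suc n. w s = u s"
        using agree by (auto simp: w_def d_def \<delta>_def less_Suc_eq)
      have Cw: "(\<Sum>k\<le>m. g k * w (m - k)) = (\<Sum>k\<le>m. g k * v (m - k)) + (\<Sum>j\<le>m. g (m - j) * d j)" for m
        unfolding w_def by (simp add: distrib_left sum.distrib rev_sum[of g d m])
      have Cd: "(\<Sum>j\<le>m. g (m - j) * d j) =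
          (if n \<le> m then - \<delta> * g (m - n) else 0) + (if Suc n \<le> m then \<alpha> * \<delta> * g (m - Suc n) else 0)" for m
      proof -
        have "(\<Sum>j\<le>m. g (m - j) * d j) = (\<Sum>j\<le>m. (if j = n then - \<delta> * g (m - j) else 0) + (if j = Suc n then \<alpha> * \<delta> * g (m - j) else 0))"
          by (intro sum.cong) (auto simp: d_def)
        also have "\<dots> = (\<Sum>j\<le>m. (if j = n then - \<delta> * g (m - j) else 0)) + (\<Sum>j\<le>m. (if j = Suc n then \<alpha> * \<delta> * g (m - j) else 0))"
          by (rule sum.distrib)
        also have "\<dots> = (if n \<le> m then - \<delta> * g (m - n) else 0) + (if Suc n \<le> m then \<alpha> * \<delta> * g (m - Suc n) else 0)"
          by (simp only: sum.delta finite_atMost atMost_iff)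
        finally show ?thesis .
      qed
      have w2: "\<forall>m<T. (\<Sum>k\<le>m. g k * w (m - k)) + ylb (Suc m) \<ge> ymin"
      proof (intro allI impI)
        fix m assume mT: "m < T"
        consider "m < n" | "m = n" | "m > n" by linarith
        then show "(\<Sum>k\<le>m. g k * w (m - k)) + ylb (Suc m) \<ge> ymin"
        proof cases
          case 1 then show ?thesis using Cw[of m] Cd[of m] feas mT by simp
        next
          case 2
          have "(\<Sum>k=1..n. g k * w (n - k)) = (\<Sum>k=1..n. g k * u (n - k))"
            using w3 by (intro sum.cong) auto
          moreover have "w n = u n" using w3 by simp
          ultimately show ?thesis using split[of w n] ugeq[OF nT] 2 by simp
        next
          case 3
          have "g (m - n) \<le> \<alpha> * g (m - n - 1)" using sh[of "m - n"] 3 by simp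
          then have "\<delta> * g (m - n) \<le> \<delta> * (\<alpha> * g (m - Suc n))" using d0
            by (simp add: mult_left_mono)
          then have "(\<Sum>j\<le>m. g (m - j) * d j) \<ge> 0" using Cd[of m] 3 by (simp add: algebra_simps)
          then show ?thesis using Cw[of m] feas[rule_format, OF mT] by simp
        qed
      qed
      have IH: "(\<Sum>t<T. u t) \<le> (\<Sum>t<T. w t)"
        using Suc.IH nj w1 w2 w3 by (metis add_Suc_shift)
      have "(\<Sum>t<T. w t) = (\<Sum>t<T. v t) + (\<Sum>t<T. d t)"
        unfolding w_def by (simp add: sum.distrib)
      moreover have "(\<Sum>t<T. d t) = - \<delta> + (if Suc n < T then \<alpha> * \<delta> else 0)"
        unfolding d_def using nT by (simp add: sum.distrib sum.delta')
      moreover have "\<alpha> * \<delta> \<le> \<delta>" using mult_right_mono[of \<alpha> 1 \<delta>] a1 d0 by simp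
      ultimately have "(\<Sum>t<T. w t) \<le> (\<Sum>t<T. v t)" using d0 by auto
      then show "(\<Sum>t<T. u t) \<le> (\<Sum>t<T. v t)" using IH by simp
    qed
  qed
  have partB: "\<forall>u'. (\<forall>t<T. u' t \<ge> 0) \<longrightarrow>
          (\<forall>ynat. admissible T ylb ynat \<longrightarrow> (\<forall>t\<in>{1..T}. wellbeing g u' ynat t \<ge> ymin)) \<longrightarrow>
          (\<Sum>t<T. u t) \<le> (\<Sum>t<T. u' t)"
  proof (intro allI impI)
    fix u' assume nn: "\<forall>t<T. u' t \<ge> 0"
      and rob: "\<forall>ynat. admissible T ylb ynat \<longrightarrow> (\<forall>t\<in>{1..T}. wellbeing g u' ynat t \<ge> ymin)"
    have "admissible T ylb ylb" unfolding admissible_def by simp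
    then have "\<forall>m<T. (\<Sum>k\<le>m. g k * u' (m - k)) + ylb (Suc m) \<ge> ymin"
    proof (intro allI impI)
      fix m assume mT: "m < T"
      have "Suc m \<in> {1..T}" using mT by simp
      then have "wellbeing g u' ylb (Suc m) \<ge> ymin" using rob \<open>admissible T ylb ylb\<close> by blast
      then show "(\<Sum>k\<le>m. g k * u' (m - k)) + ylb (Suc m) \<ge> ymin" by simp
    qed
    then show "(\<Sum>t<T. u t) \<le> (\<Sum>t<T. u' t)" using main[of T] nn by auto
  qed
  show ?thesis using partA partB by blast
qed

end
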